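(* Consider the parametric convex semi-infinite problem described in the context. Let $((\bar c,\bar b),\bar x)\in\operatorname{gph}\mathcal{S}$ and assume that $P(\bar c,\bar b)$ satisfies the Slater condition. Then there exist $M>0$, a neighbourhood $U$ of $\bar x$ and a neighbourhood $V$ of $(\bar c,\bar b)$ such that for all $(c,b)\in V$ and all $x\in\mathcal{S}(c,b)\cap U$ there exists $u\in\partial f(x)$ with $$-(c+u)\in[0,M]\,\operatorname{co}\Big(\bigcup_{t\in T_b(x)}\partial g_t(x)\Big).$$
   Context: Setting: $T$ is a compact subset of a metric space $Z$ with $T\neq Z$; $f:\mathbb{R}^n\to\mathbb{R}$ and $g_t:\mathbb{R}^n\to\mathbb{R}$ ($t\in T$) are convex, with $(t,x)\mapsto g_t(x)$ continuous on $T\times\mathbb{R}^n$. $\mathcal{C}(T,\mathbb{R})$ is the space of continuous $b:T\to\mathbb{R}$, $t\mapsto b_t$, with $\|b\|_\infty=\max_t|b_t|$; the parameter space $\mathbb{R}^n\times\mathcal{C}(T,\mathbb{R})$ carries the norm $\max\{\|c\|,\|b\|_\infty\}$. $P(c,b)$: minimize $f(x)+\langle c,x\rangle$ subject to $g_t(x)\le b_t$, $t\in T$; $\mathcal{S}(c,b)$ is its optimal solution set; $T_b(x)=\{t\in T:g_t(x)=b_t\}$. Slater condition for $P(\bar c,\bar b)$: some $\hat x$ has $g_t(\hat x)<\bar b_t$ for all $t$. $\partial$ is the convex subdifferential, co the convex hull, and for $A\subset\mathbb{R}^n$, $[0,M]\operatorname{co}(A):=\{\lambda y:\lambda\in[0,M],\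 y\in\operatorname{co}(A)\}\cup\{0_n\}$. *)

theory Defs
  imports "HOL-Analysis.Analysis"
begin

definition subdiff :: "('a::real_inner \<Rightarrow> real) \<Rightarrow> 'a \<Rightarrow> 'a set" where
  "subdiff f x = {u. \<forall>y. f x + inner u (y - x) \<le> f y}"

definition feasible :: "'z set \<Rightarrow> ('z \<Rightarrow> 'a \<Rightarrow> real) \<Rightarrow> ('z \<Rightarrow> real) \<Rightarrow> 'a set" where
  "feasible T g b = {x. \<forall>t\<in>T. g t x \<le> b t}"

definition optsol :: "'z set \<Rightarrow> ('a::real_inner \<Rightarrow> real) \<Rightarrow> ('z \<Rightarrow> 'a \<Rightarrow> real)
    \<Rightarrow> 'a \<Rightarrow> ('z \<Rightarrow> real) \<Rightarrow> 'a set" where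
  "optsol T f g c b = {x \<in> feasible T g b.
      \<forall>y \<in> feasible T g b. f x + inner c x \<le> f y + inner c y}"

definition active :: "'z set \<Rightarrow> ('z \<Rightarrow> 'a \<Rightarrow> real) \<Rightarrow> ('z \<Rightarrow> real) \<Rightarrow> 'a \<Rightarrow> 'z set" where
  "active T g b x = {t \<in> T. g t x = b t}"

definition scaled_hull :: "real \<Rightarrow> 'a::real_vector set \<Rightarrow> 'a set" where
  "scaled_hull M A = {l *\<^sub>R y | l y. l \<in> {0..M} \<and> y \<in> convex hull A} \<union> {0}"

end

theory Submission
  imports Defs
begin


lemma subgrad_dir:
  fixes h :: "'a::euclidean_space \<Rightarrow> real"
  assumes cv: "convex_on UNIV h" and mono: "\<And>s. s > 0 \<Longrightarrow> h x \<le> h (x + s *\<^sub>R e)"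
  shows "\<exists>v\<in>subdiff h x. inner v e \<ge> 0"
proof -
  define E where "E = {(y, r). h y < r}"
  define L where "L = {(x + s *\<^sub>R e, h x) | s. s \<ge> 0}"
  have cE: "convex E"
    unfolding convex_def E_def
  proof (clarsimp)
    fix y1 r1 y2 r2 and u v :: real
    assume "h y1 < r1" "h y2 < r2" "0 \<le> u" "0 \<le> v" "u + v = 1"
    then have "h (u *\<^sub>R y1 + v *\<^sub>R y2) \<le> u * h y1 + v * h y2"
      using cv by (simp add: convex_on_def)
    also have "\<dots> < u * r1 + v * r2"
    proof (cases "u = 0")
      case True then show ?thesis using \<open>h y2 < r2\<close> \<open>u+v=1\<close> by simp
    next
      case False then have "u > 0" using \<open>0 \<le> u\<close> by simp
      then have "u * h y1 < u * r1" using \<open>h y1 < r1\<close> by simp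
      moreover have "v * h y2 \<le> v * r2" using \<open>h y2 < r2\<close> \<open>0 \<le> v\<close> by (simp add: mult_left_mono)
      ultimately show ?thesis by linarith
    qed
    finally show "h (u *\<^sub>R y1 + v *\<^sub>R y2) < u * r1 + v * r2" .
  qed
  have cL: "convex L"
  proof -
    have lin: "linear (\<lambda>s::real. (s *\<^sub>R e, 0::real))"
      by (auto intro!: linearI simp: algebra_simps)
    have "L = (+) (x, h x) ` ((\<lambda>s::real. (s *\<^sub>R e, 0::real)) ` {0..})"
      unfolding L_def by (auto simp: image_image)
    then show ?thesis
      by (metis convex_translation convex_linear_image[OF lin] convex_real_interval(1))
  qed
  have ne: "E \<noteq> {}" "L \<noteq> {}"
  proof -
    have "(x, h x + 1) \<in> E" unfolding E_def by simp
    moreover have "(x + 0 *\<^sub>R e, h x) \<in> L" unfolding L_def by blast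
    ultimately show "E \<noteq> {}" "L \<noteq> {}" by auto
  qed
  have dj: "L \<inter> E = {}"
  proof -
    { fix s :: real assume "s \<ge> 0" "h (x + s *\<^sub>R e) < h x"
      then have False using mono[of s] by (cases "s = 0") auto }
    then show ?thesis unfolding L_def E_def by auto
  qed
  obtain a \<beta> where a0: "a \<noteq> 0" and aL: "\<forall>z\<in>L. inner a z \<le> \<beta>" and aE: "\<forall>z\<in>E. inner a z \<ge> \<beta>"
    using separating_hyperplane_sets[OF cL cE ne(2) ne(1) dj] by blast
  obtain a1 a2 where a: "a = (a1, a2)" by (cases a)
  have E': "\<And>y r. h y < r \<Longrightarrow> inner a1 y + a2 * r \<ge> \<beta>"
    using aE a unfolding E_def by (auto simp: inner_Pair)
  have L': "\<And>s. s \<ge> 0 \<Longrightarrow> inner a1 (x + s *\<^sub>R e) + a2 * h x \<le> \<beta>"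
    using aL a unfolding L_def by (auto simp: inner_Pair)
  have a2pos: "a2 > 0"
  proof (rule ccontr)
    assume "\<not> a2 > 0"
    then consider "a2 < 0" | "a2 = 0" by linarith
    then show False
    proof cases
      case 1
      define r where "r = max (h x + 1) ((\<beta> - inner a1 x) / a2 + 1)"
      have "h x < r" unfolding r_def by simp
      from E'[OF this] have "inner a1 x + a2 * r \<ge> \<beta>" .
      moreover have "r > (\<beta> - inner a1 x) / a2" unfolding r_def by simp
      then have "a2 * r < \<beta> - inner a1 x" using 1 by (simp add: field_simps)
      ultimately show False by linarith
    next
      case 2
      then have "a1 \<noteq> 0" using a0 a by (auto simp: zero_prod_def)
      then have pos: "inner a1 a1 > 0" by simp
      define y where "y = ((\<beta> - 1) / inner a1 a1) *\<^sub>R a1"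
      have "inner a1 y = \<beta> - 1" unfolding y_def using pos by simp
      moreover have "inner a1 y + a2 * (h y + 1) \<ge> \<beta>" by (rule E') simp
      ultimately show False using 2 by simp
    qed
  qed
  have P: "inner a1 y + a2 * h y \<ge> \<beta>" for y
  proof (rule ccontr)
    assume nP: "\<not> ?thesis"
    define \<epsilon> where "\<epsilon> = (\<beta> - inner a1 y - a2 * h y) / (2 * a2)"
    have "\<epsilon> > 0" unfolding \<epsilon>_def using nP a2pos by simp
    then have "inner a1 y + a2 * (h y + \<epsilon>) \<ge> \<beta>" by (intro E') simp
    moreover have "a2 * \<epsilon> = (\<beta> - inner a1 y - a2 * h y) / 2" unfolding \<epsilon>_def using a2pos by simp
    ultimately show False using nP by (simp add: algebra_simps)
  qed
  have L0: "inner a1 x + a2 * h x \<le> \<beta>" using L'[of 0] by simp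
  have L1: "inner a1 (x + e) + a2 * h x \<le> \<beta>" using L'[of 1] by simp
  define v where "v = (- 1 / a2) *\<^sub>R a1"
  have "v \<in> subdiff h x"
    unfolding subdiff_def
  proof (clarify)
    fix y
    have "a2 * (h x + inner v (y - x)) = a2 * h x - inner a1 (y - x)"
      unfolding v_def using a2pos by (simp add: algebra_simps)
    also have "\<dots> \<le> a2 * h y" using P[of y] L0 by (simp add: inner_diff_right)
    finally show "h x + inner v (y - x) \<le> h y" using a2pos by simp
  qed
  moreover have "inner v e \<ge> 0"
  proof -
    have "inner a1 e \<le> 0" using L1 L0 P[of x] by (simp add: inner_add_right)
    then show ?thesis unfolding v_def using a2pos by (simp add: divide_simps)
  qed
  ultimately show ?thesis by blast
qed



lemma subdiff_nonempty:
  fixes h :: "'a::euclidean_space \<Rightarrow> real"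
  assumes "convex_on UNIV h" shows "subdiff h x \<noteq> {}"
  using subgrad_dir[OF assms, of x 0] by auto

lemma descent:
  fixes h :: "'a::euclidean_space \<Rightarrow> real"
  assumes "convex_on UNIV h" and "\<forall>v\<in>subdiff h x. inner v e < 0"
  shows "\<exists>s>0. h (x + s *\<^sub>R e) < h x"
proof (rule ccontr)
  assume "\<not> ?thesis"
  then have "\<And>s. s > 0 \<Longrightarrow> h x \<le> h (x + s *\<^sub>R e)" by (meson not_less)
  from subgrad_dir[OF assms(1) this] assms(2) show False by force
qed

lemma convex_seg:
  fixes h :: "'a::real_vector \<Rightarrow> real"
  assumes cv: "convex_on UNIV h" and s: "0 < s" "s \<le> s0" and hx: "h x \<le> a"
    and hs0: "h (x + s0 *\<^sub>R e) < a"
  shows "h (x + s *\<^sub>R e) < a"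
proof -
  define t where "t = s / s0"
  have t: "0 < t" "t \<le> 1" using s unfolding t_def by auto
  have eq: "x + s *\<^sub>R e = (1 - t) *\<^sub>R x + t *\<^sub>R (x + s0 *\<^sub>R e)"
    using s unfolding t_def by (simp add: algebra_simps)
  have "h (x + s *\<^sub>R e) \<le> (1 - t) * h x + t * h (x + s0 *\<^sub>R e)"
    unfolding eq using cv t by (intro convex_onD) auto
  also have "\<dots> < (1 - t) * a + t * a"
  proof -
    have "(1 - t) * h x \<le> (1 - t) * a" using t hx by (simp add: mult_left_mono)
    moreover have "t * h (x + s0 *\<^sub>R e) < t * a" using t hs0 by simp
    ultimately show ?thesis by linarith
  qed
  finally show ?thesis by (simp add: algebra_simps)
qed

lemma subdiff_closed: "closed (subdiff h x)"
proof -
  have "subdiff h x = (\<Inter>y. {u. inner u (y - x) \<le> h y - h x})"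
    unfolding subdiff_def by (auto simp: le_diff_eq add.commute)
  moreover have "closed {u. inner u (y - x) \<le> h y - h x}" for y
    by (intro closed_Collect_le continuous_intros)
  ultimately show ?thesis by auto
qed

lemma subdiff_convex: "convex (subdiff h x)"
proof -
  have "subdiff h x = (\<Inter>y. {u. inner (y - x) u \<le> h y - h x})"
    unfolding subdiff_def by (auto simp: inner_commute le_diff_eq add.commute)
  moreover have "convex {u. inner (y - x) u \<le> h y - h x}" for y
    by (rule convex_halfspace_le)
  ultimately show ?thesis by (auto intro: convex_INT)
qed

lemma scaled_hull_in:
  assumes "0 \<le> M" "w \<in> convex hull (insert 0 G)"
  shows "M *\<^sub>R w \<in> scaled_hull M G"
proof (cases "G = {}")
  case True then show ?thesis using assms by (simp add: scaled_hull_def)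
next
  case False
  then obtain u v b where uv: "u \<ge> 0" "v \<ge> 0" "u + v = 1" "b \<in> convex hull G" "w = u *\<^sub>R 0 + v *\<^sub>R b"
    using assms(2) convex_hull_insert[OF False, of 0] by auto
  have "M * v \<in> {0..M}" using uv assms(1) by (auto intro: mult_left_le)
  moreover have "M *\<^sub>R w = (M * v) *\<^sub>R b" using uv by simp
  ultimately show ?thesis using uv unfolding scaled_hull_def by blast
qed

lemma subdiff_union_compact:
  fixes g :: "'z::metric_space \<Rightarrow> 'a::euclidean_space \<Rightarrow> real"
  assumes A: "compact A" and gc: "continuous_on (A \<times> UNIV) (\<lambda>(t,x). g t x)"
  shows "compact (\<Union>t\<in>A. subdiff (g t) x)"
proof -
  have cK: "compact (A \<times> cball x 1)" using A by (simp add: compact_Times)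
  have "continuous_on (A \<times> cball x 1) (\<lambda>(t,x). g t x)"
    using gc by (rule continuous_on_subset) auto
  then have "compact ((\<lambda>(t,x). g t x) ` (A \<times> cball x 1))"
    using cK by (rule compact_continuous_image)
  then obtain K where K: "\<And>z. z \<in> (\<lambda>(t,x). g t x) ` (A \<times> cball x 1) \<Longrightarrow> norm z \<le> K"
    using compact_imp_bounded bounded_iff by metis
  have Kb: "t \<in> A \<Longrightarrow> y \<in> cball x 1 \<Longrightarrow> \<bar>g t y\<bar> \<le> K" for t y
    using K[of "g t y"] by force
  define S where "S = {(t, v). t \<in> A \<and> v \<in> subdiff (g t) x}"
  have bnd: "norm v \<le> 2 * K" if "t \<in> A" "v \<in> subdiff (g t) x" for t v
  proof (cases "v = 0")
    case True then show ?thesis using Kb[OF that(1), of x] by simp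
  next
    case False
    define y where "y = x + (1 / norm v) *\<^sub>R v"
    have "y \<in> cball x 1" unfolding y_def using False by (simp add: dist_norm)
    have "g t x + inner v (y - x) \<le> g t y" using that(2) unfolding subdiff_def by blast
    moreover have "inner v (y - x) = norm v" unfolding y_def using False
      by (simp add: power2_norm_eq_inner[symmetric] power2_eq_square)
    ultimately show ?thesis using Kb[OF that(1) \<open>y \<in> cball x 1\<close>] Kb[OF that(1), of x] by auto
  qed
  have Ssub: "S \<subseteq> A \<times> cball 0 (2 * K)" unfolding S_def using bnd by auto
  have "closed S"
  proof -
    have cA: "closed (A \<times> (UNIV::'a set))" using A by (simp add: compact_imp_closed closed_Times)
    have "S = (\<Inter>y. (A \<times> UNIV) \<inter> (\<lambda>(t, v). g t x + inner v (y - x) - g t y) -` {..0})"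
      unfolding S_def subdiff_def by auto
    moreover have "closed ((A \<times> UNIV) \<inter> (\<lambda>(t, v). g t x + inner v (y - x) - g t y) -` {..0})" for y
    proof (rule continuous_closed_preimage[OF _ cA])
      have cxx: "continuous_on (A \<times> UNIV) (\<lambda>p::'z \<times> 'a. (fst p, x))"
        by (intro continuous_intros)
      have "continuous_on (A \<times> UNIV) (\<lambda>p::'z \<times> 'a. (\<lambda>(t,x). g t x) ((\<lambda>p. (fst p, x)) p))"
        by (rule continuous_on_compose2[OF gc cxx]) auto
      then have c1: "continuous_on (A \<times> UNIV) (\<lambda>p::'z \<times> 'a. g (fst p) x)" by simp
      have cxy: "continuous_on (A \<times> UNIV) (\<lambda>p::'z \<times> 'a. (fst p, y))"
        by (intro continuous_intros)
      have "continuous_on (A \<times> UNIV) (\<lambda>p::'z \<times> 'a. (\<lambda>(t,x). g t x) ((\<lambda>p. (fst p, y)) p))"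
        by (rule continuous_on_compose2[OF gc cxy]) auto
      then have c2: "continuous_on (A \<times> UNIV) (\<lambda>p::'z \<times> 'a. g (fst p) y)" by simp
      have "continuous_on (A \<times> UNIV) (\<lambda>p::'z \<times> 'a. g (fst p) x + inner (snd p) (y - x) - g (fst p) y)"
        by (intro continuous_intros c1 c2)
      then show "continuous_on (A \<times> UNIV) (\<lambda>(t, v). g t x + inner v (y - x) - g t y)"
        by (simp add: case_prod_beta')
    qed auto
    ultimately show ?thesis by (metis (no_types, lifting) closed_INT)
  qed
  have "(A \<times> cball 0 (2 * K)) \<inter> S = S" using Ssub by blast
  moreover have "compact ((A \<times> cball 0 (2 * K)) \<inter> S)"
    by (rule compact_Int_closed[OF compact_Times[OF A compact_cball] \<open>closed S\<close>])
  ultimately have "compact S" by simp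
  then have "compact (snd ` S)" by (intro compact_continuous_image continuous_intros)
  moreover have "snd ` S = (\<Union>t\<in>A. subdiff (g t) x)" unfolding S_def by force
  ultimately show ?thesis by simp
qed



lemma cont_t:
  assumes gc: "continuous_on (T \<times> UNIV) (\<lambda>(t, x). g t x)"
  shows "continuous_on T (\<lambda>t. g t y)"
proof -
  have c: "continuous_on T (\<lambda>t. (t, y))" by (intro continuous_intros)
  have "continuous_on T (\<lambda>t. (\<lambda>(t, x). g t x) ((\<lambda>t. (t, y)) t))"
    by (rule continuous_on_compose2[OF gc c]) auto
  then show ?thesis by simp
qed

lemma cont_x:
  assumes gc: "continuous_on (T \<times> UNIV) (\<lambda>(t, x). g t x)" and t: "t \<in> T"
  shows "continuous_on UNIV (g t)"
proof -
  have c: "continuous_on UNIV (\<lambda>x. (t, x))" by (intro continuous_intros)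
  have "continuous_on UNIV (\<lambda>x. (\<lambda>(t, x). g t x) ((\<lambda>x. (t, x)) x))"
    by (rule continuous_on_compose2[OF gc c]) (use t in auto)
  then show ?thesis by simp
qed

lemma small_step:
  fixes h :: "'a::real_normed_vector \<Rightarrow> real"
  assumes "continuous_on UNIV h" "h x < a"
  shows "\<exists>s>0. h (x + s *\<^sub>R e) < a"
proof -
  obtain d where d: "d > 0" "\<And>x'. dist x' x < d \<Longrightarrow> dist (h x') (h x) < a - h x"
    using assms unfolding continuous_on_iff by (metis UNIV_I diff_gt_0_iff_gt)
  define s where "s = d / (2 * (norm e + 1))"
  have pos: "2 * (norm e + 1) > (0::real)" by (smt (verit) norm_ge_zero)
  then have s: "s > 0" unfolding s_def using d(1) by (intro divide_pos_pos)
  have "s * norm e < d"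
  proof -
    have "s * norm e \<le> s * (norm e + 1)" using s by simp
    also have "\<dots> = d / 2" unfolding s_def using pos by (simp add: field_simps)
    finally show ?thesis using d by simp
  qed
  then have "dist (x + s *\<^sub>R e) x < d" using s by (simp add: dist_norm)
  from d(2)[OF this] have "h (x + s *\<^sub>R e) < a" by (simp add: dist_real_def)
  with s show ?thesis by blast
qed



theorem lemma4p2:
  fixes T :: "'z::metric_space set"
    and f :: "real^'n \<Rightarrow> real"
    and g :: "'z \<Rightarrow> real^'n \<Rightarrow> real"
    and cbar xbar :: "real^'n"
    and bbar :: "'z \<Rightarrow> real"
  assumes T_compact: "compact T"
    and T_proper: "T \<noteq> UNIV"
    and f_convex: "convex_on UNIV f"
    and g_convex: "\<And>t. t \<in> T \<Longrightarrow> convex_on UNIV (g t)"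
    and g_cont: "continuous_on (T \<times> UNIV) (\<lambda>(t, x). g t x)"
    and bbar_cont: "continuous_on T bbar"
    and xbar_opt: "xbar \<in> optsol T f g cbar bbar"
    and slater: "\<exists>xh. \<forall>t\<in>T. g t xh < bbar t"
  shows "\<exists>M > 0. \<exists>\<epsilon> > 0. \<exists>\<delta> > 0.
           \<forall>c b x. norm (c - cbar) < \<delta> \<longrightarrow> continuous_on T b
             \<longrightarrow> (\<forall>t\<in>T. \<bar>b t - bbar t\<bar> < \<delta>)
             \<longrightarrow> x \<in> optsol T f g c b \<longrightarrow> dist x xbar < \<epsilon>
             \<longrightarrow> (\<exists>u \<in> subdiff f x.
                   - (c + u) \<in> scaled_hull M (\<Union>t \<in> active T g b x. subdiff (g t) x))"
proof -
  obtain xh where xh: "\<forall>t\<in>T. g t xh < bbar t" using slater by blast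
  obtain \<eta> where \<eta>: "\<eta> > 0" "\<forall>t\<in>T. g t xh - bbar t \<le> - 2 * \<eta>"
  proof (cases "T = {}")
    case True then show ?thesis using that[of 1] by simp
  next
    case False
    have "continuous_on T (\<lambda>t. g t xh - bbar t)"
      by (intro continuous_intros cont_t[OF g_cont] bbar_cont)
    then obtain s where s: "s \<in> T" "\<forall>t\<in>T. g t xh - bbar t \<le> g s xh - bbar s"
      using continuous_attains_sup[OF T_compact False] by blast
    show ?thesis
      apply (rule that[of "- (g s xh - bbar s) / 2"])
      using s xh by auto
  qed
  obtain u0 where u0: "u0 \<in> subdiff f xbar" using subdiff_nonempty[OF f_convex] by blast
  define B where "B = max 1 (f xh - f xbar + norm u0 + (norm cbar + 1) * (norm (xh - xbar) + 1))"
  have B1: "B \<ge> 1" unfolding B_def by simp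
  define M where "M = 2 * B / \<eta>"
  have Mpos: "M > 0" unfolding M_def using B1 \<eta> by simp
  have MB: "M * \<eta> = 2 * B" unfolding M_def using \<eta> by simp
  have Bbound: "f xh + inner c xh - (f x + inner c x) \<le> B"
    if "norm (c - cbar) < 1" "dist x xbar < 1" for c x
  proof -
    have "f xbar + inner u0 (x - xbar) \<le> f x" using u0 unfolding subdiff_def by blast
    moreover have "inner u0 (x - xbar) \<ge> - norm u0"
    proof -
      have "\<bar>inner u0 (x - xbar)\<bar> \<le> norm u0 * norm (x - xbar)" by (rule Cauchy_Schwarz_ineq2)
      also have "\<dots> \<le> norm u0" using that(2) by (simp add: dist_norm mult_left_le)
      finally show ?thesis by simp
    qed
    moreover have "inner c (xh - x) \<le> (norm cbar + 1) * (norm (xh - xbar) + 1)"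
    proof -
      have "inner c (xh - x) \<le> norm c * norm (xh - x)" by (rule norm_cauchy_schwarz)
      also have "\<dots> \<le> (norm cbar + 1) * (norm (xh - xbar) + 1)"
      proof (rule mult_mono)
        show "norm c \<le> norm cbar + 1" using that(1) norm_triangle_ineq2[of c cbar] by simp
        have "norm (xh - x) \<le> norm (xh - xbar) + norm (xbar - x)" using norm_triangle_ineq[of "xh - xbar" "xbar - x"] by simp
        then show "norm (xh - x) \<le> norm (xh - xbar) + 1" using that(2) by (simp add: dist_norm norm_minus_commute)
      qed auto
      finally show ?thesis .
    qed
    ultimately show ?thesis unfolding B_def by (simp add: inner_diff_right)
  qed
  have main: "\<exists>u \<in> subdiff f x.
                   - (c + u) \<in> scaled_hull M (\<Union>t \<in> active T g b x. subdiff (g t) x)"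
    if c: "norm (c - cbar) < min 1 \<eta>" and bc: "continuous_on T b"
      and bb: "\<forall>t\<in>T. \<bar>b t - bbar t\<bar> < min 1 \<eta>" and xo: "x \<in> optsol T f g c b"
      and xd: "dist x xbar < 1" for c x b
  proof -
    define \<phi> where "\<phi> y = f y + inner c y" for y
    have xfeas: "\<forall>t\<in>T. g t x \<le> b t" using xo unfolding optsol_def feasible_def by blast
    have xmin: "\<And>y. \<forall>t\<in>T. g t y \<le> b t \<Longrightarrow> \<phi> x \<le> \<phi> y"
      using xo unfolding optsol_def feasible_def \<phi>_def by blast
    have xh_b: "\<forall>t\<in>T. g t xh - b t < - \<eta>"
      using \<eta>(2) bb by (smt (verit, best) min.strict_boundedE)
    have \<phi>B: "\<phi> xh - \<phi> x \<le> B" unfolding \<phi>_def using Bbound[of c x] c xd by simp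
    have \<phi>cv: "convex_on UNIV \<phi>"
    proof -
      have "convex_on UNIV (\<lambda>y. inner c y)"
        by (auto simp: convex_on_def inner_add_right algebra_simps)
      then show ?thesis unfolding \<phi>_def using f_convex by (intro convex_on_add)
    qed
    define A where "A = active T g b x"
    define G where "G = (\<Union>t\<in>A. subdiff (g t) x)"
    have AT: "A \<subseteq> T" unfolding A_def active_def by auto
    have Aact: "\<And>t. t \<in> A \<Longrightarrow> g t x = b t" unfolding A_def active_def by auto
    have cA: "compact A"
    proof -
      have "continuous_on T (\<lambda>t. g t x - b t)"
        by (intro continuous_intros cont_t[OF g_cont] bc)
      then have "closed {t \<in> T. g t x - b t = 0}"
        by (rule continuous_closed_preimage_constant[OF _ compact_imp_closed[OF T_compact]])
      moreover have "A = T \<inter> {t \<in> T. g t x - b t = 0}" unfolding A_def active_def by auto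
      ultimately show ?thesis using T_compact by auto
    qed
    have cG: "compact G" unfolding G_def
      by (rule subdiff_union_compact[OF cA continuous_on_subset[OF g_cont]]) (use AT in auto)
    show "\<exists>u\<in>subdiff f x. - (c + u) \<in> scaled_hull M (\<Union>t\<in>active T g b x. subdiff (g t) x)"
    proof (rule ccontr)
      assume H: "\<not> ?thesis"
      define S1 where "S1 = (+) c ` subdiff f x"
      define S2 where "S2 = (\<lambda>w. M *\<^sub>R w) ` (convex hull (insert 0 G))"
      define D where "D = (\<Union>a\<in>S1. \<Union>b\<in>S2. {a + b})"
      have "closed D" unfolding D_def S1_def S2_def
        by (intro closed_compact_sums closed_translation subdiff_closed compact_scaling
            compact_convex_hull compact_insert cG)
      moreover have "convex D" unfolding D_def S1_def S2_def
        by (intro convex_sums convex_translation subdiff_convex convex_scaling convex_convex_hull)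
      moreover have "0 \<notin> D"
      proof
        assume "0 \<in> D"
        then obtain u w where u: "u \<in> subdiff f x" and w: "w \<in> convex hull (insert 0 G)"
          and eq: "0 = (c + u) + M *\<^sub>R w"
          unfolding D_def S1_def S2_def by auto
        have "M *\<^sub>R w + (c + u) = 0" using eq by (simp add: add.commute)
        then have "M *\<^sub>R w = - (c + u)" by (simp only: eq_neg_iff_add_eq_0)
        then have "- (c + u) = M *\<^sub>R w" by simp
        then have "- (c + u) \<in> scaled_hull M G" using scaled_hull_in[OF less_imp_le[OF Mpos] w] by simp
        then show False using H u unfolding G_def A_def by blast
      qed
      ultimately obtain d b0 where d: "d \<noteq> 0" "0 < b0" "\<forall>z\<in>D. inner d z > b0"
        using separating_hyperplane_closed_0 by blast
      have F2: "inner d (c + u) + M * inner d w > b0"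
        if "u \<in> subdiff f x" "w \<in> convex hull (insert 0 G)" for u w
      proof -
        have "(c + u) + M *\<^sub>R w \<in> D" unfolding D_def S1_def S2_def using that by blast
        then have "b0 < inner d ((c + u) + M *\<^sub>R w)" using d(3) by blast
        then show ?thesis by (simp add: inner_add_right)
      qed
      have F1: "inner d (c + u) > b0" if "u \<in> subdiff f x" for u
        using F2[OF that, of 0] by (simp add: hull_inc)
      have F3: "inner d (c + u) + M * inner d v > b0" if "u \<in> subdiff f x" "v \<in> G" for u v
        using F2[OF that(1), of v] that(2) by (simp add: hull_inc)
      define m where "m = Inf ((\<lambda>u. inner d (c + u)) ` subdiff f x)"
      have ne: "(\<lambda>u. inner d (c + u)) ` subdiff f x \<noteq> {}" using subdiff_nonempty[OF f_convex] by blast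
      have bdd: "bdd_below ((\<lambda>u. inner d (c + u)) ` subdiff f x)"
        using F1 by (intro bdd_belowI[of _ b0]) (auto intro: less_imp_le)
      have mb0: "m \<ge> b0" unfolding m_def using F1 by (intro cInf_greatest[OF ne]) (auto intro: less_imp_le)
      have mlow: "inner d (c + u) \<ge> m" if "u \<in> subdiff f x" for u
        unfolding m_def using that bdd by (intro cInf_lower) auto
      have mv: "m + M * inner d v \<ge> b0" if "v \<in> G" for v
      proof -
        have "m \<ge> b0 - M * inner d v" unfolding m_def
          using F3[OF _ that] by (intro cInf_greatest[OF ne]) (force intro: less_imp_le)
        then show ?thesis by simp
      qed
      define \<theta> where "\<theta> = m / (M * \<eta>)"
      have \<theta>pos: "\<theta> > 0" unfolding \<theta>_def using mb0 d(2) Mpos \<eta>(1) by simp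
      have \<theta>\<eta>: "\<theta> * \<eta> = m / M" unfolding \<theta>_def using \<eta>(1) Mpos by simp
      define e where "e = - d + \<theta> *\<^sub>R (xh - x)"
      have Gneg: "inner v e < 0" if t: "t \<in> A" and v: "v \<in> subdiff (g t) x" for t v
      proof -
        have vG: "v \<in> G" unfolding G_def using t v by blast
        have "g t x + inner v (xh - x) \<le> g t xh" using v unfolding subdiff_def by blast
        then have "inner v (xh - x) < - \<eta>" using xh_b Aact[OF t] AT t by force
        then have "\<theta> * inner v (xh - x) < \<theta> * (- \<eta>)" using \<theta>pos by (rule mult_strict_left_mono)
        moreover have "- inner d v \<le> (m - b0) / M" using mv[OF vG] Mpos by (simp add: field_simps)
        moreover have "inner v e = \<theta> * inner v (xh - x) - inner d v"
          unfolding e_def by (simp add: inner_add_right inner_diff_right inner_commute[of v d] del: inner_diff_right[of _ xh x])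
        ultimately have "inner v e < (m - b0) / M - m / M"
          using \<theta>\<eta> by linarith
        also have "\<dots> = - b0 / M" by (simp add: diff_divide_distrib)
        also have "\<dots> < 0" using d(2) Mpos by simp
        finally show ?thesis .
      qed
      have \<phi>neg: "inner w e < 0" if w: "w \<in> subdiff \<phi> x" for w
      proof -
        have u: "w - c \<in> subdiff f x" using w unfolding subdiff_def \<phi>_def
          by (auto simp: inner_diff_left algebra_simps)
        have "\<phi> x + inner w (xh - x) \<le> \<phi> xh" using w unfolding subdiff_def by blast
        then have "inner w (xh - x) \<le> B" using \<phi>B by simp
        then have "\<theta> * inner w (xh - x) \<le> \<theta> * B" using \<theta>pos by simp
        also have "\<theta> * B = m / 2" unfolding \<theta>_def using MB \<eta>(1) B1 by (simp add: field_simps)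
        finally have a: "\<theta> * inner w (xh - x) \<le> m / 2" .
        have "inner d w \<ge> m" using mlow[OF u] by simp
        moreover have "inner w e = \<theta> * inner w (xh - x) - inner d w"
          unfolding e_def by (simp add: inner_add_right inner_diff_right inner_commute[of w d] del: inner_diff_right[of _ xh x])
        ultimately have "inner w e \<le> - m + m / 2" using a by linarith
        also have "\<dots> < 0" using mb0 d(2) by simp
        finally show ?thesis .
      qed
      obtain s\<phi> where s\<phi>: "s\<phi> > 0" "\<phi> (x + s\<phi> *\<^sub>R e) < \<phi> x"
        using descent[OF \<phi>cv] \<phi>neg by blast
      have "\<forall>t\<in>T. \<exists>s0>0. g t (x + s0 *\<^sub>R e) < b t"
      proof
        fix t assume tT: "t \<in> T"
        show "\<exists>s0>0. g t (x + s0 *\<^sub>R e) < b t"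
        proof (cases "t \<in> A")
          case True
          then show ?thesis using descent[OF g_convex[OF tT], of x e] Gneg Aact by force
        next
          case False
          then have "g t x < b t" using xfeas tT unfolding A_def active_def by force
          then show ?thesis by (rule small_step[OF cont_x[OF g_cont tT]])
        qed
      qed
      then obtain s0 where s0: "\<And>t. t \<in> T \<Longrightarrow> s0 t > 0 \<and> g t (x + s0 t *\<^sub>R e) < b t"
        by metis
      have "\<forall>t\<in>T. \<exists>U. open U \<and> U \<inter> T = (\<lambda>t'. g t' (x + s0 t *\<^sub>R e) - b t') -` {..<0} \<inter> T"
      proof
        fix t assume "t \<in> T"
        have ct: "continuous_on T (\<lambda>t'. g t' (x + s0 t *\<^sub>R e) - b t')"
          by (intro continuous_intros cont_t[OF g_cont] bc)
        show "\<exists>U. open U \<and> U \<inter> T = (\<lambda>t'. g t' (x + s0 t *\<^sub>R e) - b t') -` {..<0} \<inter> T"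
          using continuous_on_open_invariant[THEN iffD1, OF ct, rule_format, OF open_lessThan] .
      qed
      then obtain N where N: "\<And>t. t \<in> T \<Longrightarrow> open (N t) \<and>
          N t \<inter> T = (\<lambda>t'. g t' (x + s0 t *\<^sub>R e) - b t') -` {..<0} \<inter> T"
        by metis
      have cov: "T \<subseteq> (\<Union>t\<in>T. N t)"
      proof
        fix t assume tT: "t \<in> T"
        then have "t \<in> N t \<inter> T" using N[OF tT] s0[OF tT] by auto
        then show "t \<in> (\<Union>t\<in>T. N t)" using tT by blast
      qed
      obtain F where F: "F \<subseteq> T" "finite F" "T \<subseteq> (\<Union>t\<in>F. N t)"
        using compactE_image[OF T_compact _ cov] N by metis
      define s where "s = Min (insert s\<phi> (s0 ` F))"
      have fin: "finite (insert s\<phi> (s0 ` F))" using F(2) by simp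
      have spos: "s > 0" unfolding s_def using fin s\<phi>(1) s0 F(1) by (subst Min_gr_iff) auto
      have ssphi: "s \<le> s\<phi>" unfolding s_def using fin by simp
      have ss0: "s \<le> s0 t" if "t \<in> F" for t unfolding s_def using fin that by simp
      have feas: "\<forall>t\<in>T. g t (x + s *\<^sub>R e) \<le> b t"
      proof
        fix t' assume t'T: "t' \<in> T"
        then obtain t where t: "t \<in> F" "t' \<in> N t" using F(3) by blast
        have tT: "t \<in> T" using t F(1) by blast
        have "g t' (x + s0 t *\<^sub>R e) < b t'" using N[OF tT] t(2) t'T by auto
        then have "g t' (x + s *\<^sub>R e) < b t'"
          using convex_seg[OF g_convex[OF t'T] spos ss0[OF t(1)]] xfeas t'T by blast
        then show "g t' (x + s *\<^sub>R e) \<le> b t'" by simp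
      qed
      have "\<phi> (x + s *\<^sub>R e) < \<phi> x"
        using convex_seg[OF \<phi>cv spos ssphi order_refl s\<phi>(2)] .
      moreover have "\<phi> x \<le> \<phi> (x + s *\<^sub>R e)" using xmin[OF feas] .
      ultimately show False by simp
    qed
  qed
  show ?thesis
    apply (rule exI[of _ M], rule conjI[OF Mpos])
    apply (rule exI[of _ "1::real"], rule conjI, simp)
    apply (rule exI[of _ "min 1 \<eta>"], rule conjI)
    using \<eta>(1) main by auto
qed

end
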